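(* Let $\bar{\mathcal{G}}=(\bar{\mathcal{V}},\bar{\mathcal{E}})$ be the edge localization graph of the communication graph $\mathcal{G}$ (as defined in the context), and let $L(\bar{\mathcal{G}})$ be its directed line graph. Then for every edge $e\in\bar{\mathcal{E}}$, \[ \kappa\bigl(L(\bar{\mathcal{G}}),e\bigr)\;\ge\;\kappa\bigl(\bar{\mathcal{G}},t(e)\bigr). \]
   Context: Setting. There are $N$ agents $\mathcal{V}=\{1,\dots,N\}$ in the plane. A set $\mathcal{S}$ of subtended angle measurements is given: an element $\alpha^{u}_{wv}\in\mathcal{S}$ (with $u,v,w$ distinct agents) is the counterclockwise angle in $[-\pi,\pi)$ measured at agent $u$ from the direction of agent $v$ to the direction of agent $w$; $\alpha^{u}_{wv}\in\mathcal{S}$ if and only if $\alpha^{u}_{vw}=-\alpha^{u}_{wv}\in\mathcal{S}$. The communication graph $\mathcal{G}=(\mathcal{V},\mathcal{E})$ is the directed graph whose edges are exactly the ordered pairs $(u,v),(v,u),(u,w),(w,u)$ for all $\alpha^{u}_{wv}\in\mathcal{S}$; it is symmetric and is assumed connected. Edge localization graph. For each edge $(u,v)\in\mathcal{E}$ such that there is no $w$ with $\alpha^{v}_{wu}\in\mathcal{S}$, introduce a new virtual vertex $\bar v^{u}$ (distinct for distinct such pairs $(u,v)$; it is co-located with agent $v$). Let $\mathcal{E}^{u}=\{(u,\bar v^{u}),(\bar v^{u},u) : (u,v)\in\mathcal{E},\ \nexists w \text{ with } \alpha^{v}_{wu}\in\mathcal{S}\}$ and $\mathcal{V}^{u}$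 the set of all these virtual vertices. Then $\bar{\mathcal{V}}=\bigl(\mathcal{V}\setminus\{u\in\mathcal{V}: \text{no } \alpha^{u}_{wv}\in\mathcal{S} \text{ for any } v,w\}\bigr)\cup\mathcal{V}^{u}$ and $\bar{\mathcal{E}}=\bigl(\mathcal{E}\setminus\{(u,v),(v,u): (u,v)\in\mathcal{E},\ \nexists w \text{ with }\alpha^{v}_{wu}\in\mathcal{S}\}\bigr)\cup\mathcal{E}^{u}$. For a directed edge $e=(u,v)$, $t(e)=u$ is its tail and $h(e)=v$ its head. The directed line graph $L(\mathcal{H})$ of a directed graph $\mathcal{H}=(V,E)$ has vertex set $E$ and a directed edge $(e_1,e_2)$ for every pair $e_1,e_2\in E$ with $h(e_1)=t(e_2)$. An oriented spanning tree of a directed graph with root $r$ is an acyclic subgraph containing all vertices in which every vertex other than $r$ has a directed path to $r$. $\kappa(\mathcal{H},r)$ denotes the number of oriented spanning trees of $\mathcal{H}$ rooted at $r$. *)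

theory Defs
  imports Main
begin

text \<open>A triple (u, w, v) in S encodes the measurement alpha^u_{wv}: measured at u,
  from the direction of v to the direction of w.\<close>

definition angle_set_ok :: "'a set \<Rightarrow> ('a \<times> 'a \<times> 'a) set \<Rightarrow> bool" where
  "angle_set_ok V S \<longleftrightarrow>
     (\<forall>(u, w, v) \<in> S. u \<in> V \<and> v \<in> V \<and> w \<in> V \<and> u \<noteq> v \<and> u \<noteq> w \<and> v \<noteq> w) \<and>
     (\<forall>u w v. (u, w, v) \<in> S \<longleftrightarrow> (u, v, w) \<in> S)"

definition comm_edges :: "('a \<times> 'a \<times> 'a) set \<Rightarrow> ('a \<times> 'a) set" where
  "comm_edges S = {e. \<exists>u w v. (u, w, v) \<in> S \<and> e \<in> {(u, v), (v, u), (u, w), (w, u)}}"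

definition measures_wrt :: "('a \<times> 'a \<times> 'a) set \<Rightarrow> 'a \<Rightarrow> 'a \<Rightarrow> bool" where
  "measures_wrt S v u \<longleftrightarrow> (\<exists>w. (v, w, u) \<in> S)"

definition measuring :: "('a \<times> 'a \<times> 'a) set \<Rightarrow> 'a \<Rightarrow> bool" where
  "measuring S u \<longleftrightarrow> (\<exists>v w. (u, w, v) \<in> S)"

text \<open>Vertices of the edge localization graph: Inl u is agent u; Inr (u, v) is the
  virtual vertex bar v^u (co-located with agent v), introduced for edge (u, v).\<close>

definition unmeasured_edges :: "('a \<times> 'a \<times> 'a) set \<Rightarrow> ('a \<times> 'a) set" where
  "unmeasured_edges S = {(u, v). (u, v) \<in> comm_edges S \<and> \<not> measures_wrt S v u}"

definition virt_vertices :: "('a \<times> 'a \<times> 'a) set \<Rightarrow> ('a + 'a \<times> 'a) set" where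
  "virt_vertices S = Inr ` unmeasured_edges S"

definition virt_edges :: "('a \<times> 'a \<times> 'a) set \<Rightarrow> (('a + 'a \<times> 'a) \<times> ('a + 'a \<times> 'a)) set" where
  "virt_edges S = (\<Union>(u, v) \<in> unmeasured_edges S. {(Inl u, Inr (u, v)), (Inr (u, v), Inl u)})"

definition loc_vertices :: "'a set \<Rightarrow> ('a \<times> 'a \<times> 'a) set \<Rightarrow> ('a + 'a \<times> 'a) set" where
  "loc_vertices V S = Inl ` {u \<in> V. measuring S u} \<union> virt_vertices S"

definition loc_edges :: "('a \<times> 'a \<times> 'a) set \<Rightarrow> (('a + 'a \<times> 'a) \<times> ('a + 'a \<times> 'a)) set" where
  "loc_edges S =
     map_prod Inl Inl ` (comm_edges S - (\<Union>(u, v) \<in> unmeasured_edges S. {(u, v), (v, u)}))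
     \<union> virt_edges S"

definition line_graph_edges :: "('b \<times> 'b) set \<Rightarrow> (('b \<times> 'b) \<times> ('b \<times> 'b)) set" where
  "line_graph_edges E = {(e1, e2). e1 \<in> E \<and> e2 \<in> E \<and> snd e1 = fst e2}"

definition oriented_spanning_tree :: "'b set \<Rightarrow> ('b \<times> 'b) set \<Rightarrow> 'b \<Rightarrow> ('b \<times> 'b) set \<Rightarrow> bool" where
  "oriented_spanning_tree V E r T \<longleftrightarrow>
     r \<in> V \<and> T \<subseteq> E \<and> T \<subseteq> V \<times> V \<and> acyclic T \<and>
     (\<forall>v \<in> V. (v, r) \<in> T\<^sup>*) \<and>
     (\<forall>e \<in> T. fst e \<noteq> r) \<and>
     (\<forall>v \<in> V - {r}. card {e \<in> T. fst e = v} = 1)"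

definition kappa :: "'b set \<Rightarrow> ('b \<times> 'b) set \<Rightarrow> 'b \<Rightarrow> nat" where
  "kappa V E r = card {T. oriented_spanning_tree V E r T}"

end

theory Submission
  imports Defs
begin

lemma functional_acyclic:
  assumes func: "\<And>x y z. (x,y) \<in> R \<Longrightarrow> (x,z) \<in> R \<Longrightarrow> y = z"
    and root: "\<And>y. (r,y) \<notin> R"
    and reach: "\<And>x y. (x,y) \<in> R \<Longrightarrow> (x,r) \<in> R\<^sup>*"
  shows "acyclic R"
proof -
  have noc: "(v,v) \<notin> R\<^sup>+" if "(v,r) \<in> R\<^sup>*" for v
    using that
  proof (induction v rule: converse_rtrancl_induct)
    case base
    then show ?case using root by (metis tranclD)
  next
    case (step v w)
    show ?case
    proof
      assume "(v,v) \<in> R\<^sup>+"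
      then obtain w' where "(v,w') \<in> R" "(w',v) \<in> R\<^sup>*" by (metis tranclD)
      with func step.hyps(1) have "w' = w" by blast
      with \<open>(w',v) \<in> R\<^sup>*\<close> step.hyps(1) have "(w,w) \<in> R\<^sup>+"
        by (meson rtrancl_into_trancl1)
      with step.IH show False by simp
    qed
  qed
  show ?thesis unfolding acyclic_def
  proof (intro allI notI)
    fix v assume "(v,v) \<in> R\<^sup>+"
    then obtain w where "(v,w) \<in> R" by (metis tranclD)
    then have "(v,r) \<in> R\<^sup>*" using reach by blast
    with noc \<open>(v,v) \<in> R\<^sup>+\<close> show False by blast
  qed
qed

definition phi :: "('b \<times> 'b) set \<Rightarrow> ('b \<times> 'b) \<Rightarrow> ('b \<times> 'b) set \<Rightarrow> (('b \<times> 'b) \<times> ('b \<times> 'b)) set" where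
  "phi E e T = {(f,g). f \<in> E \<and> f \<noteq> e \<and> ((snd f = fst e \<and> g = e) \<or> (snd f \<noteq> fst e \<and> g \<in> T \<and> fst g = snd f))}"

lemma phi_tree:
  assumes sub: "E \<subseteq> V \<times> V" and eE: "e \<in> E"
    and T: "oriented_spanning_tree V E (fst e) T"
  shows "oriented_spanning_tree E (line_graph_edges E) e (phi E e T)"
proof -
  let ?r = "fst e"
  let ?T' = "phi E e T"
  from T have TE: "T \<subseteq> E" and TV: "T \<subseteq> V \<times> V" and reachT: "\<forall>v \<in> V. (v, ?r) \<in> T\<^sup>*"
    and noroot: "\<forall>g \<in> T. fst g \<noteq> ?r" and one: "\<forall>v \<in> V - {?r}. card {g \<in> T. fst g = v} = 1"
    unfolding oriented_spanning_tree_def by auto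
  have path: "\<forall>f \<in> E. f \<noteq> e \<longrightarrow> snd f = x \<longrightarrow> (f, e) \<in> ?T'\<^sup>*" if "(x, ?r) \<in> T\<^sup>*" for x
    using that
  proof (induction x rule: converse_rtrancl_induct)
    case base
    show ?case by (auto simp: phi_def)
  next
    case (step x y)
    show ?case
    proof (intro ballI impI)
      fix f assume f: "f \<in> E" "f \<noteq> e" "snd f = x"
      have xr: "x \<noteq> ?r" using noroot step.hyps(1) by force
      have "(f, (x,y)) \<in> ?T'" using f xr step.hyps(1) by (auto simp: phi_def)
      moreover have "(x,y) \<in> E" using TE step.hyps(1) by auto
      moreover have "(x,y) \<noteq> e" using xr by auto
      ultimately show "(f, e) \<in> ?T'\<^sup>*" using step.IH
        by (meson converse_rtrancl_into_rtrancl snd_conv)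
    qed
  qed
  have reach': "\<forall>f \<in> E. (f, e) \<in> ?T'\<^sup>*"
  proof
    fix f assume f: "f \<in> E"
    show "(f, e) \<in> ?T'\<^sup>*"
    proof (cases "f = e")
      case False
      have "snd f \<in> V" using f sub by auto
      then show ?thesis using path[of "snd f"] reachT f False by blast
    qed simp
  qed
  have func: "g1 = g2" if "(f,g1) \<in> ?T'" "(f,g2) \<in> ?T'" for f g1 g2
  proof (cases "snd f = ?r")
    case True
    then show ?thesis using that by (auto simp: phi_def)
  next
    case False
    have "snd f \<in> V" using that sub by (auto simp: phi_def)
    with False one have c: "card {g \<in> T. fst g = snd f} = 1" by auto
    have "g1 \<in> {g \<in> T. fst g = snd f}" "g2 \<in> {g \<in> T. fst g = snd f}"
      using that False by (auto simp: phi_def)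
    with c show ?thesis by (metis card_1_singletonE singletonD)
  qed
  have acyc: "acyclic ?T'"
  proof (rule functional_acyclic[where r = e])
    show "\<And>x y z. (x, y) \<in> ?T' \<Longrightarrow> (x, z) \<in> ?T' \<Longrightarrow> y = z" using func by blast
    show "\<And>y. (e, y) \<notin> ?T'" by (auto simp: phi_def)
    show "\<And>x y. (x, y) \<in> ?T' \<Longrightarrow> (x, e) \<in> ?T'\<^sup>*" using reach' by (auto simp: phi_def)
  qed
  have cardone: "card {p \<in> ?T'. fst p = f} = 1" if f: "f \<in> E - {e}" for f
  proof (cases "snd f = ?r")
    case True
    have "{p \<in> ?T'. fst p = f} = {(f,e)}" using True f by (auto simp: phi_def)
    then show ?thesis by simp
  next
    case False
    have "snd f \<in> V" using f sub by auto
    with False one have c: "card {g \<in> T. fst g = snd f} = 1" by auto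
    then obtain g0 where g0: "{g \<in> T. fst g = snd f} = {g0}" by (meson card_1_singletonE)
    have "{p \<in> ?T'. fst p = f} = {(f,g0)}"
    proof
      show "{p \<in> ?T'. fst p = f} \<subseteq> {(f,g0)}"
      proof
        fix p assume p: "p \<in> {p \<in> ?T'. fst p = f}"
        obtain a b where ab: "p = (a,b)" by (rule prod.exhaust)
        with p have "a = f" "(f,b) \<in> ?T'" by auto
        then have "b \<in> T" "fst b = snd f" using False unfolding phi_def by auto
        then have "b \<in> {g \<in> T. fst g = snd f}" by simp
        then have "b = g0" using g0 by simp
        then show "p \<in> {(f,g0)}" using ab \<open>a = f\<close> by simp
      qed
      have "g0 \<in> T" "fst g0 = snd f" using g0 by auto
      then show "{(f,g0)} \<subseteq> {p \<in> ?T'. fst p = f}" using f False by (auto simp: phi_def)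
    qed
    then show ?thesis by simp
  qed
  have lg: "?T' \<subseteq> line_graph_edges E" using TE eE by (auto simp: phi_def line_graph_edges_def)
  have sq: "?T' \<subseteq> E \<times> E" using TE eE by (auto simp: phi_def)
  have nout: "\<forall>p \<in> ?T'. fst p \<noteq> e" by (auto simp: phi_def)
  show ?thesis unfolding oriented_spanning_tree_def
    using eE lg sq acyc reach' cardone nout by blast
qed

lemma phi_inj:
  assumes sym: "\<And>x y. (x,y) \<in> E \<Longrightarrow> (y,x) \<in> E"
    and T1: "oriented_spanning_tree V E (fst e) T1"
    and T2: "oriented_spanning_tree V E (fst e) T2"
    and eq: "phi E e T1 = phi E e T2"
  shows "T1 \<subseteq> T2"
proof
  let ?r = "fst e"
  fix g assume g: "g \<in> T1"
  obtain x y where gxy: "g = (x,y)" by (rule prod.exhaust)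
  from T1 g gxy have gE: "(x,y) \<in> E" and xV: "x \<in> V" and xr: "x \<noteq> ?r"
    unfolding oriented_spanning_tree_def by auto
  show "g \<in> T2"
  proof (cases "\<exists>f \<in> E. f \<noteq> e \<and> snd f = x")
    case True
    then obtain f where f: "f \<in> E" "f \<noteq> e" "snd f = x" by blast
    have "(f,g) \<in> phi E e T1" using f g gxy xr by (auto simp: phi_def)
    then have "(f,g) \<in> phi E e T2" using eq by simp
    then show ?thesis using f xr gxy by (auto simp: phi_def)
  next
    case False
    have "(y,x) \<in> E" using sym gE .
    with False have yr: "(y,x) = e" by auto
    from T2 xV xr have "card {p \<in> T2. fst p = x} = 1"
      unfolding oriented_spanning_tree_def by auto
    then obtain g2 where "g2 \<in> T2" "fst g2 = x"
      by (metis (mono_tags, lifting) card_1_singletonE mem_Collect_eq singletonI)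
    moreover obtain z where "g2 = (x,z)" using \<open>fst g2 = x\<close> by (metis prod.collapse)
    moreover have "(x,z) \<in> E" using T2 calculation unfolding oriented_spanning_tree_def by auto
    ultimately have "(z,x) = e" using sym False by fastforce
    then show ?thesis using yr gxy \<open>g2 \<in> T2\<close> \<open>g2 = (x,z)\<close> by auto
  qed
qed

lemma main:
  assumes fin: "finite E" and sym: "\<And>x y. (x,y) \<in> E \<Longrightarrow> (y,x) \<in> E"
    and sub: "E \<subseteq> V \<times> V" and eE: "e \<in> E"
  shows "kappa V E (fst e) \<le> kappa E (line_graph_edges E) e"
  unfolding kappa_def
proof (rule card_inj_on_le[where f = "phi E e"])
  show "inj_on (phi E e) {T. oriented_spanning_tree V E (fst e) T}"
  proof (rule inj_onI)
    fix T1 T2 assume a: "T1 \<in> {T. oriented_spanning_tree V E (fst e) T}"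
      "T2 \<in> {T. oriented_spanning_tree V E (fst e) T}" "phi E e T1 = phi E e T2"
    have "T1 \<subseteq> T2" using phi_inj[of E V e T1 T2] sym a by simp
    moreover have "T2 \<subseteq> T1" using phi_inj[of E V e T2 T1] sym a by simp
    ultimately show "T1 = T2" by (rule subset_antisym)
  qed
  show "phi E e ` {T. oriented_spanning_tree V E (fst e) T}
        \<subseteq> {T. oriented_spanning_tree E (line_graph_edges E) e T}"
    using phi_tree[OF sub eE] by blast
  have "{T. oriented_spanning_tree E (line_graph_edges E) e T} \<subseteq> Pow (E \<times> E)"
    unfolding oriented_spanning_tree_def by auto
  then show "finite {T. oriented_spanning_tree E (line_graph_edges E) e T}"
  proof (rule finite_subset)
    show "finite (Pow (E \<times> E))" using fin by simp
  qed
qed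

lemma comm_sym: "(u,v) \<in> comm_edges S \<Longrightarrow> (v,u) \<in> comm_edges S"
  unfolding comm_edges_def by blast

lemma comm_sub: "angle_set_ok V S \<Longrightarrow> comm_edges S \<subseteq> V \<times> V"
  unfolding comm_edges_def angle_set_ok_def by fastforce

lemma unm_measuring:
  assumes ok: "angle_set_ok V S" and uv: "(u,v) \<in> unmeasured_edges S"
  shows "measuring S u"
proof -
  from uv obtain a w b where t: "(a,w,b) \<in> S" and c: "(u,v) \<in> {(a, b), (b, a), (a, w), (w, a)}"
    and nm: "\<not> measures_wrt S v u"
    unfolding unmeasured_edges_def comm_edges_def by blast
  have t2: "(a,b,w) \<in> S" using ok t unfolding angle_set_ok_def by blast
  show ?thesis using c t t2 nm unfolding measuring_def measures_wrt_def by auto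
qed

lemma loc_sym: "(x,y) \<in> loc_edges S \<Longrightarrow> (y,x) \<in> loc_edges S"
  unfolding loc_edges_def virt_edges_def
  by (auto dest: comm_sym)

lemma loc_sub:
  assumes ok: "angle_set_ok V S"
  shows "loc_edges S \<subseteq> loc_vertices V S \<times> loc_vertices V S"
proof
  fix p assume p: "p \<in> loc_edges S"
  show "p \<in> loc_vertices V S \<times> loc_vertices V S"
  proof (cases "p \<in> virt_edges S")
    case True
    then obtain u v where uv: "(u,v) \<in> unmeasured_edges S"
      and "p = (Inl u, Inr (u,v)) \<or> p = (Inr (u,v), Inl u)"
      unfolding virt_edges_def by blast
    moreover have "measuring S u" using unm_measuring[OF ok uv] .
    moreover have "u \<in> V" using uv comm_sub[OF ok] unfolding unmeasured_edges_def by auto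
    ultimately show ?thesis unfolding loc_vertices_def virt_vertices_def by auto
  next
    case False
    then obtain u v where p: "p = (Inl u, Inl v)" and uv: "(u,v) \<in> comm_edges S"
      and n1: "(u,v) \<notin> unmeasured_edges S" and n2: "(v,u) \<notin> unmeasured_edges S"
      using p unfolding loc_edges_def by blast
    have vu: "(v,u) \<in> comm_edges S" using comm_sym uv .
    have "measures_wrt S v u" using n1 uv unfolding unmeasured_edges_def by auto
    moreover have "measures_wrt S u v" using n2 vu unfolding unmeasured_edges_def by auto
    ultimately have "measuring S u" "measuring S v"
      unfolding measures_wrt_def measuring_def by auto
    moreover have "u \<in> V" "v \<in> V" using uv comm_sub[OF ok] by auto
    ultimately show ?thesis using p unfolding loc_vertices_def by auto
  qed
qed

lemma loc_fin:
  assumes fin: "finite V" and ok: "angle_set_ok V S"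
  shows "finite (loc_edges S)"
proof -
  have "loc_vertices V S \<subseteq> Inl ` V \<union> Inr ` (V \<times> V)"
    using comm_sub[OF ok] unfolding loc_vertices_def virt_vertices_def unmeasured_edges_def
    by auto
  then have "finite (loc_vertices V S)" using fin by (meson finite_SigmaI finite_UnI finite_imageI finite_subset)
  then show ?thesis using loc_sub[OF ok] by (meson finite_SigmaI finite_subset)
qed

theorem corollary1:
  fixes V :: "'a set" and S :: "('a \<times> 'a \<times> 'a) set"
  assumes "finite V"
    and "angle_set_ok V S"
    and "\<forall>u \<in> V. \<forall>v \<in> V. (u, v) \<in> (comm_edges S)\<^sup>*"
    and "e \<in> loc_edges S"
  shows "kappa (loc_edges S) (line_graph_edges (loc_edges S)) e
           \<ge> kappa (loc_vertices V S) (loc_edges S) (fst e)"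
  using main[OF loc_fin[OF assms(1,2)] loc_sym loc_sub[OF assms(2)] assms(4)] by simp

end
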